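(* Let $\lambda\in\rho(A)$ with $\xi_1(\lambda)\ne0$ and $w(\lambda)\ne0$, and let $\mathcal K(\cdot,\cdot,\lambda):(0,\infty)\times(0,\infty)\to\mathbb C^{n\times n}$ be given by $\mathcal K_{ik}(x,x',\lambda)=K(x,x',\lambda)$ where $x$ is viewed as a point of $N_i$ and $x'$ as a point of $N_k$. Then there do not exist $p\in\mathbb N$, functions $w_1,\dots,w_p\in\ker(A_T-\lambda I)$ and constants $\alpha_{lq},\beta_{lq}\in\mathbb C$ ($l,q=1,\dots,p$) such that for all $x,x'\in(0,\infty)$ $$\mathcal K(x,x',\lambda)=\begin{cases}\sum_{q=1}^p\Big(\sum_{l=1}^p\alpha_{lq}w_l(x)\Big)w_q(x')^T,& x'\le x,\\[2pt] \sum_{q=1}^p\Big(\sum_{l=1}^p\beta_{lq}w_l(x)\Big)w_q(x')^T,& x'>x,\end{cases}$$ where the $w_q$ are regarded as $\mathbb C^n$-valued column vectors on $(0,\infty)$.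
   Context: Fix an integer $n\ge 2$, constants $c_1,\dots,c_n>0$ and $0\le a_1\le\dots\le a_n<\infty$. Let $N_1,\dots,N_n$ be $n$ disjoint copies of $(0,\infty)$ and $N$ the star-shaped network obtained from $\overline{N_1},\dots,\overline{N_n}$ by identifying their endpoints $0$. $H=\prod_kL^2(N_k)$. $A$: $D(A)=\{u\in\prod_kH^2(N_k): u_i(0)=u_k(0)\ \forall i,k,\ \sum_kc_ku_k'(0^+)=0\}$, $Au=(-c_ku_k''+a_ku_k)_k$. $\ker(A_T-\lambda I)$ denotes the set of $u=(u_1,\dots,u_n)\in\prod_kC^2([0,\infty))$ with $-c_ku_k''+a_ku_k=\lambda u_k$ on $(0,\infty)$ for each $k$, $u_i(0)=u_k(0)$ for all $i,k$, and $\sum_kc_ku_k'(0^+)=0$ (no integrability at infinity required). Complex square root: $\sqrt{re^{i\phi}}=\sqrt re^{i\phi/2}$, $r\ge0$, $\phi\in[-\pi,\pi)$. For $\lambda\in\mathbb C$: $\xi_k(\lambda)=\sqrt{(\lambda-a_k)/c_k}$, $s_k(\lambda)=-\sum_{l\ne k}c_l\xi_l(\lambda)/(c_k\xi_k(\lambda))$. For $j\in\{1,\dots,n\}$, $F^{\pm,j}_\lambda:N\to\mathbb C$ is given for $x\in\overline{N_k}$ by $F^{\pm,j}_\lambda(x)=\cos(\xi_j(\lambda)x)\pm is_j(\lambda)\sin(\xi_j(\lambda)x)$ if $k=j$ and $\exp(\pm i\xi_k(\lambda)x)$ if $k\ne j$. $w(\lambda)=i\sum_jc_j\xi_j(\lambda)$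 if $\Im\lambda>0$ and $w(\lambda)=-i\sum_jc_j\xi_j(\lambda)$ if $\Im\lambda\le0$. For $w(\lambda)\ne0$, $x\in\overline{N_j}$, $x'\in N$ (sign $+$ if $\Im\lambda>0$, $-$ if $\Im\lambda\le0$; $j+1$ modulo $n$): $K(x,x',\lambda)=\frac1{w(\lambda)}F^{\pm,j}_\lambda(x)F^{\pm,j+1}_\lambda(x')$ if $x'\in\overline{N_j}$, $x'>x$; and $K(x,x',\lambda)=\frac1{w(\lambda)}F^{\pm,j+1}_\lambda(x)F^{\pm,j}_\lambda(x')$ if $x'\in\overline{N_k}$, $k\ne j$, or $x'\in\overline{N_j}$, $x'<x$. ($K$ is the kernel of the resolvent $(\lambda I-A)^{-1}$ for $\lambda\in\rho(A)$, $\Re\lambda\ge a_1$.) *)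

theory Defs
  imports "HOL-Analysis.Analysis"
begin

text \<open>Edges are indexed by k in {1..n}; a function on the network N is a family
  u :: nat => real => complex, u k being its restriction to the edge N_k = (0,infinity)
  (closure [0,infinity)).\<close>

definition arg_pi :: "complex \<Rightarrow> real" where
  "arg_pi z = (if Arg z = pi then - pi else Arg z)"

definition psqrt :: "complex \<Rightarrow> complex" where
  "psqrt z = complex_of_real (sqrt (cmod z)) * exp (\<i> * complex_of_real (arg_pi z / 2))"

definition xi :: "(nat \<Rightarrow> real) \<Rightarrow> (nat \<Rightarrow> real) \<Rightarrow> nat \<Rightarrow> complex \<Rightarrow> complex" where
  "xi c a k lam = psqrt ((lam - complex_of_real (a k)) / complex_of_real (c k))"

definition s_fun :: "nat \<Rightarrow> (nat \<Rightarrow> real) \<Rightarrow> (nat \<Rightarrow> real) \<Rightarrow> nat \<Rightarrow> complex \<Rightarrow> complex" where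
  "s_fun n c a k lam =
     - (\<Sum>l\<in>{1..n} - {k}. complex_of_real (c l) * xi c a l lam)
       / (complex_of_real (c k) * xi c a k lam)"

definition sgn_lam :: "complex \<Rightarrow> complex" where
  "sgn_lam lam = (if Im lam > 0 then 1 else -1)"

text \<open>F^{+-,j}_lam evaluated at the point x of the edge N_k\<close>
definition Ffun :: "nat \<Rightarrow> (nat \<Rightarrow> real) \<Rightarrow> (nat \<Rightarrow> real) \<Rightarrow> complex \<Rightarrow> nat \<Rightarrow> nat \<Rightarrow> real \<Rightarrow> complex" where
  "Ffun n c a lam j k x =
     (if k = j then cos (xi c a j lam * complex_of_real x)
                    + sgn_lam lam * \<i> * s_fun n c a j lam * sin (xi c a j lam * complex_of_real x)
      else exp (sgn_lam lam * \<i> * xi c a k lam * complex_of_real x))"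

definition wfun :: "nat \<Rightarrow> (nat \<Rightarrow> real) \<Rightarrow> (nat \<Rightarrow> real) \<Rightarrow> complex \<Rightarrow> complex" where
  "wfun n c a lam =
     (if Im lam > 0 then \<i> * (\<Sum>j\<in>{1..n}. complex_of_real (c j) * xi c a j lam)
      else - \<i> * (\<Sum>j\<in>{1..n}. complex_of_real (c j) * xi c a j lam))"

definition nxt :: "nat \<Rightarrow> nat \<Rightarrow> nat" where
  "nxt n j = j mod n + 1"

text \<open>Matrix kernel: Kmat i k x x' = K(x,x',lam) with x on N_i and x' on N_k\<close>
definition Kmat :: "nat \<Rightarrow> (nat \<Rightarrow> real) \<Rightarrow> (nat \<Rightarrow> real) \<Rightarrow> complex \<Rightarrow> nat \<Rightarrow> nat \<Rightarrow> real \<Rightarrow> real \<Rightarrow> complex" where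
  "Kmat n c a lam i k x x' =
     (if k = i \<and> x' > x
      then Ffun n c a lam i i x * Ffun n c a lam (nxt n i) k x' / wfun n c a lam
      else Ffun n c a lam (nxt n i) i x * Ffun n c a lam i k x' / wfun n c a lam)"

definition kerAT :: "nat \<Rightarrow> (nat \<Rightarrow> real) \<Rightarrow> (nat \<Rightarrow> real) \<Rightarrow> complex \<Rightarrow> (nat \<Rightarrow> real \<Rightarrow> complex) set" where
  "kerAT n c a lam = {u. \<exists>d1 d2 :: nat \<Rightarrow> real \<Rightarrow> complex.
      (\<forall>k\<in>{1..n}.
         (\<forall>x\<ge>0. (u k has_vector_derivative d1 k x) (at x within {0..})) \<and>
         (\<forall>x\<ge>0. (d1 k has_vector_derivative d2 k x) (at x within {0..})) \<and>
         continuous_on {0..} (d2 k) \<and>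
         (\<forall>x>0. - complex_of_real (c k) * d2 k x + complex_of_real (a k) * u k x = lam * u k x)) \<and>
      (\<forall>i\<in>{1..n}. \<forall>k\<in>{1..n}. u i 0 = u k 0) \<and>
      (\<Sum>k\<in>{1..n}. complex_of_real (c k) * d1 k 0) = 0}"

definition inH :: "nat \<Rightarrow> (nat \<Rightarrow> real \<Rightarrow> complex) \<Rightarrow> bool" where
  "inH n f = (\<forall>k\<in>{1..n}. f k measurable_on {0<..} \<and>
                          (\<lambda>x. (cmod (f k x))^2) integrable_on {0<..})"

definition normH :: "nat \<Rightarrow> (nat \<Rightarrow> real \<Rightarrow> complex) \<Rightarrow> real" where
  "normH n f = sqrt (\<Sum>k\<in>{1..n}. integral {0<..} (\<lambda>x. (cmod (f k x))^2))"

text \<open>u in D(A), with v = u' and g = u'' (weak derivatives, given as witnesses):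
  u_k in H^2(0,infinity) (u_k, u_k', u_k'' in L^2, u_k and u_k' absolutely continuous),
  continuity at the vertex and Kirchhoff condition.\<close>
definition domA :: "nat \<Rightarrow> (nat \<Rightarrow> real) \<Rightarrow> (nat \<Rightarrow> real \<Rightarrow> complex) \<Rightarrow> (nat \<Rightarrow> real \<Rightarrow> complex)
                    \<Rightarrow> (nat \<Rightarrow> real \<Rightarrow> complex) \<Rightarrow> bool" where
  "domA n c u v g =
     (inH n u \<and> inH n v \<and> inH n g \<and>
      (\<forall>k\<in>{1..n}. \<forall>x\<ge>0. (v k has_integral (u k x - u k 0)) {0..x} \<and>
                          (g k has_integral (v k x - v k 0)) {0..x}) \<and>
      (\<forall>i\<in>{1..n}. \<forall>k\<in>{1..n}. u i 0 = u k 0) \<and>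
      (\<Sum>k\<in>{1..n}. complex_of_real (c k) * v k 0) = 0)"

text \<open>(lam I - A) u = f in H, i.e. almost everywhere on each edge, where A u = (-c_k u_k'' + a_k u_k)_k\<close>
definition res_eq :: "nat \<Rightarrow> (nat \<Rightarrow> real) \<Rightarrow> (nat \<Rightarrow> real) \<Rightarrow> complex \<Rightarrow> (nat \<Rightarrow> real \<Rightarrow> complex)
                     \<Rightarrow> (nat \<Rightarrow> real \<Rightarrow> complex) \<Rightarrow> (nat \<Rightarrow> real \<Rightarrow> complex) \<Rightarrow> bool" where
  "res_eq n c a lam u g f =
     (\<forall>k\<in>{1..n}. \<exists>N. negligible N \<and> (\<forall>x\<in>{0<..} - N.
        lam * u k x - (- complex_of_real (c k) * g k x + complex_of_real (a k) * u k x) = f k x))"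

definition resolvent_set :: "nat \<Rightarrow> (nat \<Rightarrow> real) \<Rightarrow> (nat \<Rightarrow> real) \<Rightarrow> complex set" where
  "resolvent_set n c a = {lam.
     (\<forall>f. inH n f \<longrightarrow> (\<exists>u v g. domA n c u v g \<and> res_eq n c a lam u g f)) \<and>
     (\<forall>u v g. domA n c u v g \<and> res_eq n c a lam u g (\<lambda>k x. 0) \<longrightarrow>
        (\<forall>k\<in>{1..n}. \<exists>N. negligible N \<and> (\<forall>x\<in>{0<..} - N. u k x = 0))) \<and>
     (\<exists>C. \<forall>u v g f. domA n c u v g \<and> inH n f \<and> res_eq n c a lam u g f \<longrightarrow>
        normH n u \<le> C * normH n f)}"

end

theory Submission
  imports Defs
begin

lemma dexp: "((\<lambda>t. exp (z * complex_of_real t)) has_vector_derivative (z * exp (z * complex_of_real t))) (at t within S)"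
proof -
  have "((\<lambda>w. exp (z * w)) has_field_derivative (exp (z * complex_of_real t) * z)) (at (complex_of_real t))"
    by (auto intro!: derivative_eq_intros)
  from has_vector_derivative_real_field[OF this] show ?thesis by (simp add: mult.commute)
qed

lemma ode_tail:
  fixes V D1 D2 :: "real \<Rightarrow> complex"
  assumes d1: "\<forall>t\<ge>0. (V has_vector_derivative D1 t) (at t within {0..})"
  and d2: "\<forall>t\<ge>0. (D1 has_vector_derivative D2 t) (at t within {0..})"
  and ode: "\<forall>t>0. D2 t = z*z * V t"
  and tail: "\<forall>t>T. V t = C * exp (z * complex_of_real t)"
  and T: "T \<ge> 0"
  shows "V 0 = C \<and> D1 0 = C * z"
proof -
  define e where "e t = exp (z * complex_of_real t)" for t
  define f where "f t = exp (- z * complex_of_real t)" for t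
  have de: "(e has_vector_derivative z * e t) (at t within S)" for t S
    unfolding e_def by (rule dexp)
  have df: "(f has_vector_derivative (-z) * f t) (at t within S)" for t S
    unfolding f_def by (rule dexp)
  have ef: "e t * f t = 1" for t unfolding e_def f_def by (simp add: exp_add[symmetric])
  define r where "r t = D1 t * e t - V t * (z * e t)" for t
  have dr: "(r has_derivative (\<lambda>h. 0)) (at t within {0..})" if "t \<in> {0..} - {0}" for t
  proof -
    have "(r has_vector_derivative (D1 t * (z * e t) + D2 t * e t - (V t * (z * (z * e t)) + D1 t * (z * e t)))) (at t within {0..})"
      unfolding r_def using that d1 d2
      by (auto intro!: derivative_eq_intros de)
    moreover have "D1 t * (z * e t) + D2 t * e t - (V t * (z * (z * e t)) + D1 t * (z * e t)) = 0"
      using ode that by (auto simp: algebra_simps)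
    ultimately show ?thesis by (simp add: has_vector_derivative_def)
  qed
  have rc: "continuous_on {0..} r"
  proof (rule has_derivative_continuous_on)
    fix t :: real assume "t \<in> {0..}"
    then have "(r has_vector_derivative (D1 t * (z * e t) + D2 t * e t - (V t * (z * (z * e t)) + D1 t * (z * e t)))) (at t within {0..})"
      unfolding r_def using d1 d2 by (auto intro!: derivative_eq_intros de)
    then show "(r has_derivative (\<lambda>h. h *\<^sub>R (D1 t * (z * e t) + D2 t * e t - (V t * (z * (z * e t)) + D1 t * (z * e t))))) (at t within {0..})"
      by (simp add: has_vector_derivative_def)
  qed
  define t0 where "t0 = T + 1"
  have t0: "t0 > T" "t0 > 0" using T by (auto simp: t0_def)
  have "(V has_vector_derivative D1 t0) (at t0)"
  proof -
    have "at t0 within {0..} = at t0" using t0 by (intro at_within_interior) simp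
    with d1 t0 show ?thesis by (metis less_imp_le)
  qed
  moreover have "(V has_vector_derivative C * (z * e t0)) (at t0)"
  proof (rule has_vector_derivative_transform_within_open[where f="\<lambda>t. C * e t" and S="{T<..}"])
    show "((\<lambda>t. C * e t) has_vector_derivative C * (z * e t0)) (at t0)"
      by (auto intro!: derivative_eq_intros de)
  qed (use t0 tail e_def in auto)
  ultimately have D1t0: "D1 t0 = C * (z * e t0)" by (rule vector_derivative_unique_at)
  have Vt0: "V t0 = C * e t0" using tail t0 e_def by auto
  have r0: "r t0 = 0" unfolding r_def D1t0 Vt0 by simp
  have rz: "r t = 0" if "t \<ge> 0" for t
    using has_derivative_zero_unique_strong_convex[of "{0..}" "{0}" r t0 0 t] rc dr r0 t0 that
    by auto
  have D1V: "D1 t = V t * z" if "t \<ge> 0" for t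
  proof -
    have "(D1 t - V t * z) * e t = 0" using rz[OF that] unfolding r_def by (simp add: algebra_simps)
    moreover have "e t \<noteq> 0" unfolding e_def by simp
    ultimately show ?thesis by simp
  qed
  define q where "q t = V t * f t" for t
  have dq: "(q has_derivative (\<lambda>h. 0)) (at t within {0..})" if "t \<in> {0..} - {}" for t
  proof -
    have h1: "(q has_vector_derivative (V t * (-z * f t) + D1 t * f t)) (at t within {0..})"
      unfolding q_def using that d1 by (auto intro!: derivative_eq_intros df)
    have h2: "V t * (-z * f t) + D1 t * f t = 0" using D1V that by (simp add: algebra_simps)
    have "(q has_vector_derivative 0) (at t within {0..})" using h1 unfolding h2 .
    then show ?thesis by (simp add: has_vector_derivative_def)
  qed
  have qc: "continuous_on {0..} q"
    apply (rule has_derivative_continuous_on) using dq by auto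
  have qt0: "q t0 = C" unfolding q_def Vt0 using ef[of t0] by (simp add: algebra_simps)
  have "q 0 = C"
    using has_derivative_zero_unique_strong_convex[of "{0..}" "{}" q t0 C 0] qc dq qt0 t0 by auto
  then have "V 0 = C" unfolding q_def f_def by simp
  with D1V[of 0] show ?thesis by (simp add: mult.commute)
qed

lemma psqrt_sq: "psqrt z * psqrt z = z"
proof -
  have e: "exp (\<i> * complex_of_real (arg_pi z)) = exp (\<i> * complex_of_real (Arg z))"
    unfolding arg_pi_def by (auto simp: exp_eq_polar cis.ctr)
  have "psqrt z * psqrt z = complex_of_real (cmod z) * exp (\<i> * complex_of_real (arg_pi z))"
    unfolding psqrt_def
    by (simp add: exp_add[symmetric] algebra_simps flip: of_real_mult)
  also have "\<dots> = z" unfolding e by (metis cis_conv_exp mult.commute rcis_cmod_Arg rcis_def)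
  finally show ?thesis .
qed

theorem theorem8p1:
  fixes n :: nat and c a :: "nat \<Rightarrow> real" and lam :: complex
  assumes "n \<ge> 2"
    and "\<forall>k\<in>{1..n}. c k > 0"
    and "\<forall>k\<in>{1..n}. 0 \<le> a k"
    and "\<forall>i\<in>{1..n}. \<forall>k\<in>{1..n}. i \<le> k \<longrightarrow> a i \<le> a k"
    and "lam \<in> resolvent_set n c a"
    and "xi c a 1 lam \<noteq> 0"
    and "wfun n c a lam \<noteq> 0"
  shows "\<not> (\<exists>(p::nat) (W :: nat \<Rightarrow> nat \<Rightarrow> real \<Rightarrow> complex) (\<alpha> :: nat \<Rightarrow> nat \<Rightarrow> complex)
              (\<beta> :: nat \<Rightarrow> nat \<Rightarrow> complex).
            (\<forall>l\<in>{1..p}. W l \<in> kerAT n c a lam) \<and>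
            (\<forall>i\<in>{1..n}. \<forall>k\<in>{1..n}. \<forall>x>0. \<forall>x'>0.
               Kmat n c a lam i k x x' =
                 (if x' \<le> x
                  then (\<Sum>q=1..p. (\<Sum>l=1..p. \<alpha> l q * W l i x) * W q k x')
                  else (\<Sum>q=1..p. (\<Sum>l=1..p. \<beta> l q * W l i x) * W q k x'))))"
proof
  assume "\<exists>(p::nat) (W :: nat \<Rightarrow> nat \<Rightarrow> real \<Rightarrow> complex) (\<alpha> :: nat \<Rightarrow> nat \<Rightarrow> complex)
              (\<beta> :: nat \<Rightarrow> nat \<Rightarrow> complex).
            (\<forall>l\<in>{1..p}. W l \<in> kerAT n c a lam) \<and>
            (\<forall>i\<in>{1..n}. \<forall>k\<in>{1..n}. \<forall>x>0. \<forall>x'>0.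
               Kmat n c a lam i k x x' =
                 (if x' \<le> x
                  then (\<Sum>q=1..p. (\<Sum>l=1..p. \<alpha> l q * W l i x) * W q k x')
                  else (\<Sum>q=1..p. (\<Sum>l=1..p. \<beta> l q * W l i x) * W q k x')))"
  then obtain p :: nat and W :: "nat \<Rightarrow> nat \<Rightarrow> real \<Rightarrow> complex" and \<alpha> \<beta> :: "nat \<Rightarrow> nat \<Rightarrow> complex" where Wk: "\<forall>l\<in>{1..p}. W l \<in> kerAT n c a lam"
    and KW: "\<forall>i\<in>{1..n}. \<forall>k\<in>{1..n}. \<forall>x>0. \<forall>x'>0.
               Kmat n c a lam i k x x' =
                 (if x' \<le> x
                  then (\<Sum>q=1..p. (\<Sum>l=1..p. \<alpha> l q * W l i x) * W q k x')
                  else (\<Sum>q=1..p. (\<Sum>l=1..p. \<beta> l q * W l i x) * W q k x'))" by blast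
  have "\<forall>l\<in>{1..p}. \<exists>d. (\<forall>k\<in>{1..n}.
         (\<forall>x\<ge>0. (W l k has_vector_derivative fst d k x) (at x within {0..})) \<and>
         (\<forall>x\<ge>0. (fst d k has_vector_derivative snd d k x) (at x within {0..})) \<and>
         continuous_on {0..} (snd d k) \<and>
         (\<forall>x>0. - complex_of_real (c k) * snd d k x + complex_of_real (a k) * W l k x = lam * W l k x)) \<and>
      (\<forall>i\<in>{1..n}. \<forall>k\<in>{1..n}. W l i 0 = W l k 0) \<and>
      (\<Sum>k\<in>{1..n}. complex_of_real (c k) * fst d k 0) = 0" (is "\<forall>l\<in>_. \<exists>d. ?P l d")
  proof
    fix l assume "l \<in> {1..p}"
    with Wk have "W l \<in> kerAT n c a lam" by blast
    then obtain d1 d2 where h: "(\<forall>k\<in>{1..n}.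
         (\<forall>x\<ge>0. (W l k has_vector_derivative d1 k x) (at x within {0..})) \<and>
         (\<forall>x\<ge>0. (d1 k has_vector_derivative d2 k x) (at x within {0..})) \<and>
         continuous_on {0..} (d2 k) \<and>
         (\<forall>x>0. - complex_of_real (c k) * d2 k x + complex_of_real (a k) * W l k x = lam * W l k x)) \<and>
      (\<forall>i\<in>{1..n}. \<forall>k\<in>{1..n}. W l i 0 = W l k 0) \<and>
      (\<Sum>k\<in>{1..n}. complex_of_real (c k) * d1 k 0) = 0"
      unfolding kerAT_def mem_Collect_eq by (elim exE)
    show "\<exists>d. ?P l d"
      apply (rule exI[of _ "(d1, d2)"])
      apply (unfold fst_conv snd_conv)
      apply (rule h)
      done
  qed
  from bchoice[OF this] obtain d where dd: "\<forall>l\<in>{1..p}. ?P l (d l)" by blast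
  have d: "\<forall>l\<in>{1..p}. (\<forall>k\<in>{1..n}.
         (\<forall>x\<ge>0. (W l k has_vector_derivative fst (d l) k x) (at x within {0..})) \<and>
         (\<forall>x\<ge>0. (fst (d l) k has_vector_derivative snd (d l) k x) (at x within {0..})) \<and>
         (\<forall>x>0. - complex_of_real (c k) * snd (d l) k x + complex_of_real (a k) * W l k x = lam * W l k x)) \<and>
      (\<forall>i\<in>{1..n}. \<forall>k\<in>{1..n}. W l i 0 = W l k 0) \<and>
      (\<Sum>k\<in>{1..n}. complex_of_real (c k) * fst (d l) k 0) = 0"
    using dd by blast
  define b where "b q = (\<Sum>l=1..p. \<beta> l q * W l 1 1)" for q
  define V where "V k t = (\<Sum>q=1..p. b q * W q k t)" for k t
  define E1 where "E1 k t = (\<Sum>q=1..p. b q * fst (d q) k t)" for k t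
  define E2 where "E2 k t = (\<Sum>q=1..p. b q * snd (d q) k t)" for k t
  define w where "w = wfun n c a lam"
  define z where "z k = sgn_lam lam * \<i> * xi c a k lam" for k
  define C :: "nat \<Rightarrow> complex" where "C k = (if k = 1 then Ffun n c a lam 1 1 1 / w else Ffun n c a lam 2 1 1 / w)" for k
  have n1: "nxt n 1 = 2" using assms(1) by (simp add: nxt_def)
  have sg2: "sgn_lam lam * sgn_lam lam = 1" by (simp add: sgn_lam_def)
  have key: "V k 0 = C k \<and> E1 k 0 = C k * z k" if k: "k \<in> {1..n}" for k
  proof (rule ode_tail[where T=1])
    have dW1: "(W q k has_vector_derivative fst (d q) k t) (at t within {0..})"
      if "q \<in> {1..p}" "t \<ge> 0" for q t using d k that by blast
    have dW2: "(fst (d q) k has_vector_derivative snd (d q) k t) (at t within {0..})"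
      if "q \<in> {1..p}" "t \<ge> 0" for q t using d k that by blast
    show "\<forall>t\<ge>0. (V k has_vector_derivative E1 k t) (at t within {0..})"
      unfolding V_def E1_def
      by (intro allI impI has_vector_derivative_sum has_vector_derivative_mult_right dW1)
    show "\<forall>t\<ge>0. (E1 k has_vector_derivative E2 k t) (at t within {0..})"
      unfolding E2_def E1_def
      by (intro allI impI has_vector_derivative_sum has_vector_derivative_mult_right dW2)
    have ck: "c k > 0" using assms(2) k by auto
    have zz: "z k * z k = (complex_of_real (a k) - lam) / complex_of_real (c k)"
    proof -
      have "z k * z k = - (xi c a k lam * xi c a k lam)"
        unfolding z_def using sg2 by (simp add: algebra_simps)
      also have "\<dots> = (complex_of_real (a k) - lam) / complex_of_real (c k)"
        unfolding xi_def psqrt_sq by (simp add: minus_divide_left)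
      finally show ?thesis .
    qed
    show "\<forall>t>0. E2 k t = z k * z k * V k t"
    proof (intro allI impI)
      fix t :: real assume t: "t > 0"
      have "snd (d q) k t = z k * z k * W q k t" if "q \<in> {1..p}" for q
      proof -
        have "- complex_of_real (c k) * snd (d q) k t + complex_of_real (a k) * W q k t = lam * W q k t"
          using d that k t by blast
        then show ?thesis unfolding zz using ck by (simp add: field_simps)
      qed
      then show "E2 k t = z k * z k * V k t" unfolding E2_def V_def
        by (simp add: sum_distrib_left algebra_simps)
    qed
    show "\<forall>t>1. V k t = C k * exp (z k * complex_of_real t)"
    proof (intro allI impI)
      fix t :: real assume t: "t > 1"
      have "Kmat n c a lam 1 k 1 t = V k t"
        using KW[rule_format, of 1 k 1 t] k t assms(1) unfolding V_def b_def
        by (simp add: sum_distrib_right)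
      moreover have "Kmat n c a lam 1 k 1 t = C k * exp (z k * complex_of_real t)"
        using t n1 unfolding Kmat_def C_def z_def w_def Ffun_def by auto
      ultimately show "V k t = C k * exp (z k * complex_of_real t)" by simp
    qed
  qed simp
  have n2: "2 \<in> {1..n}" "1 \<in> {1..n}" using assms(1) by auto
  have cont: "V k 0 = V 2 0" if "k \<in> {1..n}" for k
  proof -
    have "W q k 0 = W q 2 0" if "q \<in> {1..p}" for q
    proof -
      have "\<forall>i\<in>{1..n}. \<forall>k\<in>{1..n}. W q i 0 = W q k 0" using d that by blast
      then show ?thesis using \<open>k \<in> {1..n}\<close> n2(1) by blast
    qed
    then show ?thesis unfolding V_def by (intro sum.cong refl) simp
  qed
  have Ck: "C k = C 2" if "k \<in> {1..n}" for k using key[OF that] key[OF n2(1)] cont[OF that] by simp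
  have kir: "(\<Sum>k\<in>{1..n}. complex_of_real (c k) * E1 k 0) = 0"
  proof -
    have "(\<Sum>k\<in>{1..n}. complex_of_real (c k) * E1 k 0)
        = (\<Sum>q=1..p. b q * (\<Sum>k\<in>{1..n}. complex_of_real (c k) * fst (d q) k 0))"
      unfolding E1_def by (simp add: sum_distrib_left algebra_simps, rule sum.swap)
    also have "\<dots> = 0"
    proof (rule sum.neutral, rule ballI)
      fix q assume "q \<in> {1..p}"
      then have "(\<Sum>k\<in>{1..n}. complex_of_real (c k) * fst (d q) k 0) = 0" using d by blast
      then show "b q * (\<Sum>k\<in>{1..n}. complex_of_real (c k) * fst (d q) k 0) = 0" by simp
    qed
    finally show ?thesis .
  qed
  have "(\<Sum>k\<in>{1..n}. complex_of_real (c k) * E1 k 0)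
       = C 2 * sgn_lam lam * \<i> * (\<Sum>k\<in>{1..n}. complex_of_real (c k) * xi c a k lam)"
  proof -
    have "complex_of_real (c k) * E1 k 0 = C 2 * sgn_lam lam * \<i> * (complex_of_real (c k) * xi c a k lam)"
      if "k \<in> {1..n}" for k
      using key[OF that] Ck[OF that] by (simp add: z_def)
    then have "(\<Sum>k\<in>{1..n}. complex_of_real (c k) * E1 k 0)
       = (\<Sum>k\<in>{1..n}. C 2 * sgn_lam lam * \<i> * (complex_of_real (c k) * xi c a k lam))"
      by (rule sum.cong[OF refl])
    then show ?thesis by (simp only: sum_distrib_left)
  qed
  moreover have "(\<Sum>k\<in>{1..n}. complex_of_real (c k) * xi c a k lam) \<noteq> 0"
    using assms(7) unfolding wfun_def by (auto split: if_splits)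
  moreover have "sgn_lam lam \<noteq> 0" by (simp add: sgn_lam_def)
  moreover have "C 2 \<noteq> 0" using assms(7) unfolding C_def w_def Ffun_def by simp
  ultimately show False using kir by simp
qed

end
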